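(* Let $G$ be a torsion-free locally compact abelian group and let $G^{*}$ be its minimal divisible extension. Then $G_{op}\subseteq G^{*}_{op}$.
   Context: A subgroup $H$ of an abelian group $G$ is pure if $nH=H\cap nG$ for every positive integer $n$. For an LCA group $G$, $G_{op}$ denotes the intersection of all open pure subgroups of $G$. For an LCA group $G$, $G^{*}$ denotes the minimal divisible extension (divisible hull) of $G$, topologized as an LCA group containing $G$ as an open subgroup (as in Hewitt–Ross 4.18.h); for torsion-free $G$, $G^{*}$ is torsion-free. *)

theory Defs
  imports "HOL-Analysis.Analysis"
begin

text \<open>An LCA group is modelled as a type of class topological_ab_group_add
  (abelian group with continuous addition and negation) that is Hausdorff
  (class t2_space) and locally compact.\<close>

definition LCA_group :: "'a::{topological_ab_group_add, t2_space} itself \<Rightarrow> bool" where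
  "LCA_group _ \<longleftrightarrow> locally_compact_space (euclidean :: 'a topology)"

definition nmult :: "nat \<Rightarrow> 'a::comm_monoid_add \<Rightarrow> 'a" where
  "nmult n x = (\<Sum>_<n. x)"

definition is_subgroup :: "'a::ab_group_add set \<Rightarrow> bool" where
  "is_subgroup H \<longleftrightarrow> 0 \<in> H \<and> (\<forall>x\<in>H. \<forall>y\<in>H. x + y \<in> H) \<and> (\<forall>x\<in>H. - x \<in> H)"

definition pure_subgroup :: "'a::ab_group_add set \<Rightarrow> bool" where
  "pure_subgroup H \<longleftrightarrow> is_subgroup H \<and>
     (\<forall>n>0. nmult n ` H = H \<inter> range (nmult n))"

definition G_op :: "'a::{topological_ab_group_add} set" where
  "G_op = \<Inter> {H. open H \<and> pure_subgroup H}"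

definition torsion_free :: "'a::ab_group_add itself \<Rightarrow> bool" where
  "torsion_free _ \<longleftrightarrow> (\<forall>(x::'a) n. n > 0 \<longrightarrow> nmult n x = 0 \<longrightarrow> x = 0)"

definition divisible :: "'a::ab_group_add itself \<Rightarrow> bool" where
  "divisible _ \<longleftrightarrow> (\<forall>(y::'a) n. n > 0 \<longrightarrow> (\<exists>z. nmult n z = y))"

definition additive_hom :: "('a::ab_group_add \<Rightarrow> 'b::ab_group_add) \<Rightarrow> bool" where
  "additive_hom j \<longleftrightarrow> (\<forall>x y. j (x + y) = j x + j y)"

text \<open>j : G \<rightarrow> D exhibits D as a minimal divisible extension (divisible hull) of G,
  topologized so that G is an open subgroup of D (Hewitt-Ross 4.18.h):
  j is an injective homomorphism that is a homeomorphism onto an open subgroup,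
  D is divisible, and the extension is essential (every nonzero subgroup of D
  meets j(G) nontrivially), which characterizes minimality.\<close>
definition divisible_hull ::
  "('a::{topological_ab_group_add, t2_space} \<Rightarrow> 'b::{topological_ab_group_add, t2_space}) \<Rightarrow> bool" where
  "divisible_hull j \<longleftrightarrow>
     additive_hom j \<and> inj j \<and> continuous_on UNIV j \<and>
     (\<forall>U. open U \<longrightarrow> open (j ` U)) \<and>
     divisible TYPE('b) \<and>
     (\<forall>K. is_subgroup K \<and> K \<noteq> {0} \<longrightarrow> K \<inter> range j \<noteq> {0})"

end

theory Submission
  imports Defs
begin

lemma hom_basics:
  fixes j :: "'a::ab_group_add \<Rightarrow> 'b::ab_group_add"
  assumes "additive_hom j"
  shows "j 0 = 0" "j (- x) = - j x" "j (nmult n x) = nmult n (j x)"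
proof -
  have a: "j (x + y) = j x + j y" for x y using assms by (simp add: additive_hom_def)
  show z: "j 0 = 0" using a[of 0 0] by simp
  show "j (- x) = - j x" using a[of x "- x"] z by (simp add: add_eq_0_iff)
  show "j (nmult n x) = nmult n (j x)"
    by (induction n) (simp_all add: nmult_def z a)
qed

lemma nmult_add: "nmult n (x + y) = nmult n x + nmult n (y::'a::ab_group_add)"
  by (induction n) (simp_all add: nmult_def algebra_simps)

lemma nmult_minus: "nmult n (- x) = - nmult n (x::'a::ab_group_add)"
  by (induction n) (simp_all add: nmult_def algebra_simps)

lemma nmult_diff: "nmult n (x - y) = nmult n x - nmult n (y::'a::ab_group_add)"
  using nmult_add[of n x "- y"] nmult_minus[of n y] by simp

theorem corollary9:
  fixes j :: "'a::{topological_ab_group_add, t2_space} \<Rightarrow> 'b::{topological_ab_group_add, t2_space}"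
  assumes "LCA_group TYPE('a)"
    and "torsion_free TYPE('a)"
    and "LCA_group TYPE('b)"
    and "divisible_hull j"
  shows "j ` (G_op :: 'a set) \<subseteq> (G_op :: 'b set)"
proof -
  have hom: "additive_hom j" and ij: "inj j" and cj: "continuous_on UNIV j"
    and ess: "\<And>K. is_subgroup K \<Longrightarrow> K \<noteq> {0} \<Longrightarrow> K \<inter> range j \<noteq> {0}"
    using assms(4) unfolding divisible_hull_def by blast+
  have tfa: "\<And>(x::'a) n. n > 0 \<Longrightarrow> nmult n x = 0 \<Longrightarrow> x = 0"
    using assms(2) unfolding torsion_free_def by blast
  note hb = hom_basics[OF hom]
  have a: "j (x + y) = j x + j y" for x y using hom by (simp add: additive_hom_def)
  have tfb: "z = 0" if n: "n > 0" and z: "nmult n (z::'b) = 0" for n z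
  proof (rule ccontr)
    assume "z \<noteq> 0"
    define K where "K = {w::'b. nmult n w = 0}"
    have "is_subgroup K" unfolding is_subgroup_def K_def
      by (simp add: nmult_add nmult_minus) (simp add: nmult_def)
    moreover have "K \<noteq> {0}" using z \<open>z \<noteq> 0\<close> K_def by blast
    ultimately have "K \<inter> range j \<noteq> {0}" by (rule ess)
    moreover have "0 \<in> K \<inter> range j" using hb(1) unfolding K_def
      by (auto simp: nmult_def intro: range_eqI[of 0 j 0])
    ultimately obtain g where g: "j g \<noteq> 0" "nmult n (j g) = 0" unfolding K_def by blast
    then have "j (nmult n g) = j 0" using hb by simp
    then have "nmult n g = 0" using ij by (simp add: inj_eq)
    then have "g = 0" using tfa n by blast
    then show False using g hb by simp
  qed
  show ?thesis
  proof
    fix y assume "y \<in> j ` (G_op :: 'a set)"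
    then obtain x where x: "x \<in> (G_op :: 'a set)" and y: "y = j x" by blast
    show "y \<in> (G_op :: 'b set)" unfolding G_op_def
    proof
      fix H :: "'b set" assume "H \<in> {H. open H \<and> pure_subgroup H}"
      then have oH: "open H" and pH: "pure_subgroup H" by auto
      have sH: "0 \<in> H" "\<And>x y. x \<in> H \<Longrightarrow> y \<in> H \<Longrightarrow> x + y \<in> H" "\<And>x. x \<in> H \<Longrightarrow> - x \<in> H"
        using pH unfolding pure_subgroup_def is_subgroup_def by blast+
      have pur: "\<And>n. n > 0 \<Longrightarrow> nmult n ` H = H \<inter> range (nmult n)"
        using pH unfolding pure_subgroup_def by blast
      define P where "P = j -` H"
      have "open P" unfolding P_def using open_vimage[OF oH cj] .
      moreover have "is_subgroup P" unfolding P_def is_subgroup_def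
        using sH hb a by auto
      moreover have "nmult n ` P = P \<inter> range (nmult n)" if n: "n > 0" for n
      proof
        show "nmult n ` P \<subseteq> P \<inter> range (nmult n)"
        proof
          fix w assume "w \<in> nmult n ` P"
          then obtain p where p: "p \<in> P" "w = nmult n p" by blast
          have "j w \<in> nmult n ` H" using p hb(3) unfolding P_def by auto
          then have "j w \<in> H" using pur[OF n] by blast
          then show "w \<in> P \<inter> range (nmult n)" using p unfolding P_def by auto
        qed
        show "P \<inter> range (nmult n) \<subseteq> nmult n ` P"
        proof
          fix w assume "w \<in> P \<inter> range (nmult n)"
          then obtain v where w: "j w \<in> H" "w = nmult n v" unfolding P_def by blast
          then have "j w \<in> H \<inter> range (nmult n)" using hb(3) by auto
          then obtain h where h: "h \<in> H" "j w = nmult n h" using pur[OF n] by force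
          have "nmult n (j v - h) = 0" using h w hb(3) by (simp add: nmult_diff)
          then have "j v - h = 0" by (rule tfb[OF n])
          then have "j v = h" by simp
          then have "v \<in> P" using h unfolding P_def by simp
          then show "w \<in> nmult n ` P" using w by blast
        qed
      qed
      ultimately have "P \<in> {H. open H \<and> pure_subgroup H}" unfolding pure_subgroup_def by blast
      then have "x \<in> P" using x unfolding G_op_def by blast
      then show "y \<in> H" using y unfolding P_def by simp
    qed
  qed
qed

end
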